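(* Let $(\pi_r)_{r\in\mathbb{N}}$ be periods and let $(k_t)_{t\in\mathbb{N}}$ be the multiperiodic sequence with periods $(\pi_r)$ and seeds $\sigma_r=1$ for all $r\in\mathbb{N}$. Let $w_r:=\inf\{t\in\mathbb{N}: k_t=r\}$. If $r\in\mathbb{N}$ is such that $\pi_i\ge 2$ for all $1\le i\le r-1$, then $$w_r=\left\lceil\cdots\left\lceil\left\lceil\frac{\pi_{r-1}}{\pi_{r-1}-1}\right\rceil\frac{\pi_{r-2}}{\pi_{r-2}-1}\right\rceil\cdots\frac{\pi_1}{\pi_1-1}\right\rceil,$$ i.e. $w_r=u_1$ where $u_r:=1$ and $u_{i}:=\lceil u_{i+1}\,\pi_{i}/(\pi_{i}-1)\rceil$ for $i=r-1,r-2,\dots,1$ (so $w_1=1$).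
   Context: $\mathbb{N}=\{1,2,3,\dots\}$. Multiperiodic sequence: given periods $\pi_r\in\mathbb{N}$ and seeds $\sigma_r\in\{1,\dots,\pi_r\}$, the sequence $(k_t)_{t\in\mathbb{N}}$ with values in $\mathbb{N}\cup\{\infty\}$ is defined by requiring, for each $r$, that the subsequence $(k^{(r)}_t)_{t\in\mathbb{N}}$ obtained by deleting all tokens $k_t<r$ satisfies $k^{(r)}_t=r\iff t\equiv\sigma_r\pmod{\pi_r}$; entries left undefined for all $r$ are set to $\infty$. Equivalently: clocks $\phi_r$ start at $\sigma_r$; for each token, scan $r=1,2,\dots$, decrementing each clock with $\phi_r>1$, until the first $r$ with $\phi_r=1$, output $k_t=r$ and reset $\phi_r=\pi_r$. *)

theory Defs
  imports Complex_Main "HOL-Library.Extended_Nat"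
begin

text \<open>Index conventions: periods \<pi> r, seeds \<sigma> r and clocks \<phi> r are meaningful for r \<ge> 1;
  tokens k t are meaningful for t \<ge> 1. Token values live in enat (\<infinity> = infinity).\<close>

definition first_ready :: "(nat \<Rightarrow> nat) \<Rightarrow> enat" where
  "first_ready \<phi> = (if \<exists>r\<ge>1. \<phi> r = 1 then enat (LEAST r. 1 \<le> r \<and> \<phi> r = 1) else \<infinity>)"

definition clock_step :: "(nat \<Rightarrow> nat) \<Rightarrow> (nat \<Rightarrow> nat) \<Rightarrow> (nat \<Rightarrow> nat)" where
  "clock_step \<pi> \<phi> = (\<lambda>r. if 1 \<le> r \<and> enat r < first_ready \<phi> then \<phi> r - 1
                          else if enat r = first_ready \<phi> then \<pi> r else \<phi> r)"

text \<open>Clock state before token number n+1.\<close>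
primrec clocks :: "(nat \<Rightarrow> nat) \<Rightarrow> (nat \<Rightarrow> nat) \<Rightarrow> nat \<Rightarrow> (nat \<Rightarrow> nat)" where
  "clocks \<pi> \<sigma> 0 = \<sigma>"
| "clocks \<pi> \<sigma> (Suc n) = clock_step \<pi> (clocks \<pi> \<sigma> n)"

definition mp_seq :: "(nat \<Rightarrow> nat) \<Rightarrow> (nat \<Rightarrow> nat) \<Rightarrow> nat \<Rightarrow> enat" where
  "mp_seq \<pi> \<sigma> t = first_ready (clocks \<pi> \<sigma> (t - 1))"

definition first_hit :: "(nat \<Rightarrow> enat) \<Rightarrow> nat \<Rightarrow> enat" where
  "first_hit k r = (INF t \<in> {t. 1 \<le> t \<and> k t = enat r}. enat t)"

text \<open>u_aux \<pi> r j = u_{r-j}, where u_r = 1 and u_i = ceil(u_{i+1} \<pi>_i / (\<pi>_i - 1)).\<close>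
primrec u_aux :: "(nat \<Rightarrow> nat) \<Rightarrow> nat \<Rightarrow> nat \<Rightarrow> nat" where
  "u_aux \<pi> r 0 = 1"
| "u_aux \<pi> r (Suc j) = nat \<lceil>real (u_aux \<pi> r j) * real (\<pi> (r - 1 - j)) / (real (\<pi> (r - 1 - j)) - 1)\<rceil>"

definition u_chain :: "(nat \<Rightarrow> nat) \<Rightarrow> nat \<Rightarrow> nat" where
  "u_chain \<pi> r = u_aux \<pi> r (r - 1)"

end

theory Submission
  imports Defs
begin

definition sh :: "(nat \<Rightarrow> nat) \<Rightarrow> (nat \<Rightarrow> nat)" where
  "sh \<phi> = (\<lambda>i. if i = 0 then 1 else \<phi> (Suc i))"

lemma fr_enat_iff:
  "first_ready \<phi> = enat r \<longleftrightarrow> (1 \<le> r \<and> \<phi> r = 1 \<and> (\<forall>j. 1 \<le> j \<and> j < r \<longrightarrow> \<phi> j \<noteq> 1))"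
proof
  assume h: "first_ready \<phi> = enat r"
  then have ex: "\<exists>r\<ge>1. \<phi> r = 1" and r: "r = (LEAST r. 1 \<le> r \<and> \<phi> r = 1)"
    unfolding first_ready_def by (auto split: if_splits)
  from ex obtain r0 where "1 \<le> r0 \<and> \<phi> r0 = 1" by auto
  then have "1 \<le> r \<and> \<phi> r = 1" unfolding r by (rule LeastI)
  moreover have "\<forall>j. 1 \<le> j \<and> j < r \<longrightarrow> \<phi> j \<noteq> 1"
    using not_less_Least r by blast
  ultimately show "1 \<le> r \<and> \<phi> r = 1 \<and> (\<forall>j. 1 \<le> j \<and> j < r \<longrightarrow> \<phi> j \<noteq> 1)" by blast
next
  assume h: "1 \<le> r \<and> \<phi> r = 1 \<and> (\<forall>j. 1 \<le> j \<and> j < r \<longrightarrow> \<phi> j \<noteq> 1)"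
  have "(LEAST r. 1 \<le> r \<and> \<phi> r = 1) = r"
    by (rule Least_equality) (use h in \<open>auto simp: not_less[symmetric]\<close>)
  then show "first_ready \<phi> = enat r" using h unfolding first_ready_def by auto
qed

lemma fr_inf_iff: "first_ready \<phi> = \<infinity> \<longleftrightarrow> (\<forall>r\<ge>1. \<phi> r \<noteq> 1)"
  unfolding first_ready_def by auto

lemma fr_ne0: "first_ready \<phi> \<noteq> enat 0"
  using fr_enat_iff by auto

lemma fr_one: "\<phi> 1 = 1 \<Longrightarrow> first_ready \<phi> = enat 1"
  using fr_enat_iff by auto

lemma fr_sh: assumes "\<phi> 1 \<noteq> 1" shows "first_ready \<phi> = eSuc (first_ready (sh \<phi>))"
proof (cases "first_ready (sh \<phi>)")
  case (enat j)
  then have j: "1 \<le> j \<and> sh \<phi> j = 1 \<and> (\<forall>i. 1 \<le> i \<and> i < j \<longrightarrow> sh \<phi> i \<noteq> 1)"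
    using fr_enat_iff by blast
  have "first_ready \<phi> = enat (Suc j)"
    unfolding fr_enat_iff
  proof (intro conjI allI impI)
    show "\<phi> (Suc j) = 1" using j by (auto simp: sh_def)
    fix i assume "1 \<le> i \<and> i < Suc j"
    then have i: "1 \<le> i" "i < Suc j" by auto
    show "\<phi> i \<noteq> 1"
    proof (cases "i = 1")
      case True then show ?thesis using assms by simp
    next
      case False
      then have "1 \<le> i - 1" "i - 1 < j" using i by auto
      then have "sh \<phi> (i - 1) \<noteq> 1" using j by blast
      then show ?thesis using i False by (simp add: sh_def)
    qed
  qed simp
  then show ?thesis using enat by (simp add: eSuc_enat)
next
  case infinity
  then have "\<forall>r\<ge>1. sh \<phi> r \<noteq> 1" using fr_inf_iff by blast
  have "\<forall>r\<ge>1. \<phi> r \<noteq> 1"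
  proof (intro allI impI)
    fix r :: nat assume r: "1 \<le> r"
    show "\<phi> r \<noteq> 1"
    proof (cases "r = 1")
      case True then show ?thesis using assms by simp
    next
      case False
      then obtain j where j: "r = Suc j" "1 \<le> j" using r by (cases r) auto
      then have "sh \<phi> j \<noteq> 1" using \<open>\<forall>r\<ge>1. sh \<phi> r \<noteq> 1\<close> by blast
      then show ?thesis using j by (simp add: sh_def)
    qed
  qed
  then have "first_ready \<phi> = \<infinity>" using fr_inf_iff by blast
  with \<open>first_ready (sh \<phi>) = \<infinity>\<close> show ?thesis by simp
qed

lemma sh_step1: assumes "\<phi> 1 \<noteq> 1"
  shows "sh (clock_step \<pi> \<phi>) = clock_step (\<pi> \<circ> Suc) (sh \<phi>)"
proof
  fix i
  have F: "first_ready \<phi> = eSuc (first_ready (sh \<phi>))" using fr_sh assms .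
  show "sh (clock_step \<pi> \<phi>) i = clock_step (\<pi> \<circ> Suc) (sh \<phi>) i"
  proof (cases "i = 0")
    case True
    have "clock_step (\<pi> \<circ> Suc) (sh \<phi>) 0 = sh \<phi> 0"
      using fr_ne0[of "sh \<phi>"] by (simp add: clock_step_def)
    then show ?thesis using True by (simp add: sh_def)
  next
    case False
    then have "enat (Suc i) < first_ready \<phi> \<longleftrightarrow> enat i < first_ready (sh \<phi>)"
         "enat (Suc i) = first_ready \<phi> \<longleftrightarrow> enat i = first_ready (sh \<phi>)"
      using F by (simp_all add: eSuc_enat[symmetric])
    then show ?thesis using False by (simp add: sh_def clock_step_def)
  qed
qed

lemma sh_step2: assumes "\<phi> 1 = 1"
  shows "sh (clock_step \<pi> \<phi>) = sh \<phi>"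
  using fr_one[of \<phi>, OF assms] by (auto simp: sh_def clock_step_def fun_eq_iff)

lemma clock1:
  assumes p: "2 \<le> \<pi> 1"
  shows "clocks \<pi> (\<lambda>_. 1) n 1 = (if n mod \<pi> 1 = 0 then 1 else \<pi> 1 + 1 - n mod \<pi> 1)"
proof (induction n)
  case 0 then show ?case by simp
next
  case (Suc n)
  let ?p = "\<pi> 1"
  let ?\<phi> = "clocks \<pi> (\<lambda>_. 1) n"
  show ?case
  proof (cases "n mod ?p = 0")
    case True
    then have "?\<phi> 1 = 1" using Suc by simp
    then have "clocks \<pi> (\<lambda>_. 1) (Suc n) 1 = ?p"
      using fr_one by (simp add: clock_step_def)
    moreover have "Suc n mod ?p = 1" using True p
      by (simp add: mod_Suc)
    ultimately show ?thesis by simp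
  next
    case False
    have lt: "n mod ?p < ?p" using p by simp
    then have v: "?\<phi> 1 = ?p + 1 - n mod ?p" "?\<phi> 1 \<noteq> 1" using Suc False by auto
    have "first_ready ?\<phi> \<noteq> enat 1" using v fr_enat_iff by auto
    then have "enat 1 < first_ready ?\<phi>" using fr_ne0[of ?\<phi>]
      by (cases "first_ready ?\<phi>") auto
    then have "clocks \<pi> (\<lambda>_. 1) (Suc n) 1 = ?\<phi> 1 - 1"
      by (simp add: clock_step_def)
    then show ?thesis using v False lt
      by (cases "Suc (n mod ?p) = ?p") (auto simp: mod_Suc)
  qed
qed


primrec cnt :: "nat \<Rightarrow> nat \<Rightarrow> nat" where
  "cnt p 0 = 0"
| "cnt p (Suc n) = cnt p n + (if n mod p = 0 then 0 else 1)"

lemma sh_clocks: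
  assumes p: "2 \<le> \<pi> 1"
  shows "sh (clocks \<pi> (\<lambda>_. 1) n) = clocks (\<pi> \<circ> Suc) (\<lambda>_. 1) (cnt (\<pi> 1) n)"
proof (induction n)
  case 0 then show ?case by (simp add: sh_def fun_eq_iff)
next
  case (Suc n)
  show ?case
  proof (cases "n mod \<pi> 1 = 0")
    case True
    then have "clocks \<pi> (\<lambda>_. 1) n 1 = 1" using clock1[of \<pi> n, OF p] by simp
    then show ?thesis using Suc True sh_step2 by simp
  next
    case False
    have "n mod \<pi> 1 < \<pi> 1" using p by simp
    then have "clocks \<pi> (\<lambda>_. 1) n 1 \<noteq> 1" using clock1[of \<pi> n, OF p] False by simp
    then show ?thesis using Suc False sh_step1 by (simp add: comp_def)
  qed
qed

lemma kform:
  assumes p: "2 \<le> \<pi> 1"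
  shows "first_ready (clocks \<pi> (\<lambda>_. 1) n) = (if n mod \<pi> 1 = 0 then enat 1
     else eSuc (first_ready (clocks (\<pi> \<circ> Suc) (\<lambda>_. 1) (cnt (\<pi> 1) n))))"
proof (cases "n mod \<pi> 1 = 0")
  case True
  then show ?thesis using clock1[of \<pi> n, OF p] fr_one by simp
next
  case False
  have "n mod \<pi> 1 < \<pi> 1" using p by simp
  then have "clocks \<pi> (\<lambda>_. 1) n 1 \<noteq> 1" using clock1[of \<pi> n, OF p] False by simp
  then show ?thesis using False fr_sh sh_clocks[of \<pi> n, OF p] by simp
qed

lemma dq: "s < (p::nat) \<Longrightarrow> (q * p + s) div p = q"
  by simp
lemma F: assumes "1 \<le> (p::nat)" "n mod p \<noteq> 0" shows "(Suc n + p - 1) div p = (n + p - 1) div p"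
proof -
  let ?q = "n div p" let ?s = "n mod p"
  have n: "n = ?q * p + ?s" by simp
  have s: "?s < p" "1 \<le> ?s" using assms by auto
  have "Suc n + p - 1 = Suc ?q * p + ?s" using n by (simp add: algebra_simps)
  then have a: "(Suc n + p - 1) div p = Suc ?q" using s dq by metis
  have "1 \<le> n" using s(2) by (metis le_trans mod_less_eq_dividend)
  have "n + p - 1 = Suc ?q * p + (?s - 1)" using n s \<open>1 \<le> n\<close> by (simp add: algebra_simps)
  then have b: "(n + p - 1) div p = Suc ?q" using s dq
    by (metis less_imp_diff_less)
  show ?thesis using a b by simp
qed
lemma T: assumes "1 \<le> (p::nat)" "n mod p = 0" shows "(n + p - 1) div p = n div p" "(Suc n + p - 1) div p = Suc (n div p)"
proof -
  let ?q = "n div p"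
  have n: "n = ?q * p" using assms by auto
  have "n + p - 1 = ?q * p + (p - 1)" using n assms by simp
  then show "(n + p - 1) div p = n div p" using dq assms by (metis diff_less zero_less_one less_le_trans)
  have "Suc n + p - 1 = Suc ?q * p + 0" using n assms by simp
  then show "(Suc n + p - 1) div p = Suc (n div p)" using dq assms
    by (metis less_le_trans zero_less_one)
qed
lemma L: "1 \<le> (p::nat) \<Longrightarrow> (n + p - 1) div p \<le> n"
proof (cases n)
  case 0
  assume p: "1 \<le> p"
  then show ?thesis using 0 by simp
next
  case (Suc k)
  assume p: "1 \<le> p"
  have "k \<le> k * p" using p by simp
  then have "n + p - 1 \<le> n * p" using Suc by simp
  then have "(n + p - 1) div p \<le> (n * p) div p" by (rule div_le_mono)
  then show ?thesis using p by simp
qed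
lemma ci: assumes p: "2 \<le> (p::nat)" shows "m * p \<le> N * (p - 1) \<longleftrightarrow> m \<le> N - (N + p - 1) div p"
proof (cases "m \<le> N")
  case False
  have "N * (p - 1) \<le> N * p" by simp
  also have "N * p < m * p" using False p by simp
  finally show ?thesis using False by auto
next
  case True
  let ?d = "(N + p - 1) div p"
  have dN: "?d \<le> N" using L p by simp
  have "m \<le> N - ?d \<longleftrightarrow> ?d < Suc (N - m)" using True dN by auto
  also have "\<dots> \<longleftrightarrow> N + p - 1 < Suc (N - m) * p" using p by (simp add: div_less_iff_less_mult)
  also have "\<dots> \<longleftrightarrow> N \<le> (N - m) * p" using p by auto
  also have "\<dots> \<longleftrightarrow> m * p \<le> N * (p - 1)"
  proof -
    have "(N - m) * p = N * p - m * p" by (simp add: diff_mult_distrib)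
    moreover have "N * (p - 1) = N * p - N" by (simp add: diff_mult_distrib2)
    moreover have "m * p \<le> N * p" "N \<le> N * p" using True p by auto
    ultimately show ?thesis by linarith
  qed
  finally show ?thesis by simp
qed
lemma cnt_closed: "1 \<le> p \<Longrightarrow> cnt p n = n - (n + p - 1) div p"
proof (induction n)
  case 0 then show ?case by simp
next
  case (Suc n)
  show ?case
  proof (cases "n mod p = 0")
    case True
    then obtain k where k: "n = p * k" by auto
    have a: "(n + p - 1) div p = k" using T(1)[OF Suc.prems True] k Suc.prems by simp
    have b: "(Suc n + p - 1) div p = Suc k" using T(2)[OF Suc.prems True] k Suc.prems by simp
    have "k \<le> n" using k Suc.prems by simp
    then show ?thesis using Suc a b True by simp
  next
    case False
    have "(Suc n + p - 1) div p = (n + p - 1) div p"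
      using F Suc.prems False by blast
    moreover have "(n + p - 1) div p \<le> n" using L Suc.prems by blast
    ultimately show ?thesis using Suc False by simp
  qed
qed

lemma cnt_iff: "2 \<le> p \<Longrightarrow> m * p \<le> N * (p - 1) \<longleftrightarrow> m \<le> cnt p N"
  using ci cnt_closed[of p N] by simp

lemma cnt_mono: "a \<le> b \<Longrightarrow> cnt p a \<le> cnt p b"
  by (induction b) (auto simp: le_Suc_eq)

lemma ceil_iff:
  assumes "2 \<le> p"
  shows "nat \<lceil>real m * real p / (real p - 1)\<rceil> \<le> N \<longleftrightarrow> m * p \<le> N * (p - 1)"
proof -
  have pos: "real p - 1 > 0" using assms by simp
  have "nat \<lceil>real m * real p / (real p - 1)\<rceil> \<le> N \<longleftrightarrow> real m * real p / (real p - 1) \<le> real N"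
    by (simp add: nat_le_iff ceiling_le_iff)
  also have "\<dots> \<longleftrightarrow> real m * real p \<le> real N * (real p - 1)"
    using pos by (simp add: divide_le_eq)
  also have "\<dots> \<longleftrightarrow> real (m * p) \<le> real (N * (p - 1))"
    using assms by (simp add: of_nat_diff)
  also have "\<dots> \<longleftrightarrow> m * p \<le> N * (p - 1)" by (rule of_nat_le_iff)
  finally show ?thesis .
qed

lemma u_aux_shift:
  "j \<le> r - 1 \<Longrightarrow> u_aux \<pi> (Suc r) j = u_aux (\<pi> \<circ> Suc) r j"
proof (induction j)
  case 0 then show ?case by simp
next
  case (Suc j)
  then have "Suc (r - 1 - j) = r - j" by simp
  then show ?case using Suc by simp
qed


lemma mp_form:
  assumes p: "2 \<le> \<pi> 1" and t: "1 \<le> t"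
  shows "mp_seq \<pi> (\<lambda>_. 1) t = (if (t - 1) mod \<pi> 1 = 0 then enat 1
     else eSuc (mp_seq (\<pi> \<circ> Suc) (\<lambda>_. 1) (cnt (\<pi> 1) (t - 1) + 1)))"
  unfolding mp_seq_def using kform[of \<pi> "t - 1", OF p] by simp

lemma main:
  "1 \<le> r \<Longrightarrow> (\<forall>i. 1 \<le> i \<and> i \<le> r - 1 \<longrightarrow> 2 \<le> \<pi> i) \<Longrightarrow>
   1 \<le> u_chain \<pi> r \<and> mp_seq \<pi> (\<lambda>_. 1) (u_chain \<pi> r) = enat r \<and>
   (\<forall>t. 1 \<le> t \<and> t < u_chain \<pi> r \<longrightarrow> mp_seq \<pi> (\<lambda>_. 1) t \<noteq> enat r)"
proof (induction r arbitrary: \<pi>)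
  case 0 then show ?case by simp
next
  case (Suc r)
  show ?case
  proof (cases "r = 0")
    case True
    have "mp_seq \<pi> (\<lambda>_. 1) 1 = enat 1" unfolding mp_seq_def by (simp add: fr_one)
    then show ?thesis using True by (simp add: u_chain_def)
  next
    case False
    let ?\<pi>' = "\<pi> \<circ> Suc"
    let ?p = "\<pi> 1"
    let ?k = "mp_seq \<pi> (\<lambda>_. 1)"
    let ?k' = "mp_seq ?\<pi>' (\<lambda>_. 1)"
    have p: "2 \<le> ?p" using Suc.prems False by auto
    have big': "\<forall>i. 1 \<le> i \<and> i \<le> r - 1 \<longrightarrow> 2 \<le> ?\<pi>' i" using Suc.prems by auto
    define m where "m = u_chain ?\<pi>' r"
    have IH: "1 \<le> m" "?k' m = enat r" "\<forall>t. 1 \<le> t \<and> t < m \<longrightarrow> ?k' t \<noteq> enat r"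
    proof -
      have r1: "1 \<le> r" using False by simp
      show "1 \<le> m" "?k' m = enat r" "\<forall>t. 1 \<le> t \<and> t < m \<longrightarrow> ?k' t \<noteq> enat r"
        using Suc.IH[of ?\<pi>', OF r1 big'] unfolding m_def by blast+
    qed
    define N0 where "N0 = nat \<lceil>real m * real ?p / (real ?p - 1)\<rceil>"
    obtain j where rj: "r = Suc j" using False by (cases r) auto
    have e1: "u_chain \<pi> (Suc r) = nat \<lceil>real (u_aux \<pi> (Suc r) j) * real ?p / (real ?p - 1)\<rceil>"
      using rj by (simp add: u_chain_def)
    have e2: "u_aux \<pi> (Suc r) j = m"
      using u_aux_shift[of j r \<pi>] rj unfolding m_def u_chain_def by simp
    have U: "u_chain \<pi> (Suc r) = N0" using e1 e2 unfolding N0_def by simp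
    have key: "\<And>N. N0 \<le> N \<longleftrightarrow> m \<le> cnt ?p N"
      unfolding N0_def using ceil_iff[OF p] cnt_iff[OF p] by simp
    have N1: "1 \<le> N0" using key[of 0] IH(1) by simp
    have c1: "cnt ?p (N0 - 1) < m"
    proof -
      have "\<not> N0 \<le> N0 - 1" using N1 by simp
      then show ?thesis using key[of "N0 - 1"] by simp
    qed
    have c2: "m \<le> cnt ?p (Suc (N0 - 1))" using key[of N0] N1 by simp
    have nd: "(N0 - 1) mod ?p \<noteq> 0" and cm: "cnt ?p (N0 - 1) + 1 = m"
      using c1 c2 by (auto split: if_splits)
    have hit: "?k N0 = enat (Suc r)"
      using mp_form[of \<pi> N0, OF p N1] nd cm IH(2) by (simp add: eSuc_enat)
    have nohit: "\<forall>t. 1 \<le> t \<and> t < N0 \<longrightarrow> ?k t \<noteq> enat (Suc r)"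
    proof (intro allI impI notI)
      fix t assume t: "1 \<le> t \<and> t < N0" and kt: "?k t = enat (Suc r)"
      have nd': "(t - 1) mod ?p \<noteq> 0"
      proof
        assume "(t - 1) mod ?p = 0"
        then have "?k t = enat 1" using mp_form[of \<pi> t, OF p] t by simp
        then show False using kt False by simp
      qed
      then have "eSuc (?k' (cnt ?p (t - 1) + 1)) = enat (Suc r)"
        using mp_form[of \<pi> t, OF p] t kt by simp
      then have "?k' (cnt ?p (t - 1) + 1) = enat r"
        by (simp add: eSuc_enat[symmetric])
      then have "m \<le> cnt ?p (t - 1) + 1" using IH(3) by force
      also have "\<dots> = cnt ?p (Suc (t - 1))" using nd' by simp
      finally have "N0 \<le> Suc (t - 1)" using key by blast
      then show False using t by simp
    qed
    show ?thesis using U N1 hit nohit by simp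
  qed
qed

lemma first_hit_eq:
  assumes "1 \<le> w" "k w = enat r" "\<forall>t. 1 \<le> t \<and> t < w \<longrightarrow> k t \<noteq> enat r"
  shows "first_hit k r = enat w"
  unfolding first_hit_def
proof (rule antisym)
  show "(INF t \<in> {t. 1 \<le> t \<and> k t = enat r}. enat t) \<le> enat w"
    using assms by (intro INF_lower2[of w]) auto
  show "enat w \<le> (INF t \<in> {t. 1 \<le> t \<and> k t = enat r}. enat t)"
  proof (rule INF_greatest)
    fix t assume "t \<in> {t. 1 \<le> t \<and> k t = enat r}"
    then show "enat w \<le> enat t" using assms by (auto simp: not_less[symmetric])
  qed
qed

theorem theorem2:
  fixes \<pi> :: "nat \<Rightarrow> nat" and r :: nat
  assumes periods: "\<forall>i\<ge>1. 1 \<le> \<pi> i"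
    and r_pos: "1 \<le> r"
    and big: "\<forall>i. 1 \<le> i \<and> i \<le> r - 1 \<longrightarrow> 2 \<le> \<pi> i"
  shows "first_hit (mp_seq \<pi> (\<lambda>_. 1)) r = enat (u_chain \<pi> r)"
  using main[OF r_pos big] first_hit_eq by blast

end
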